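(* Let $p$ be a prime and let $\lambda=(\lambda_1, \lambda_2, \ldots, \lambda_s)$ be a partition of $d$ with distinct parts $\lambda_1>\lambda_2>\cdots>\lambda_s>0$. Define $$\hat{\lambda}=(\lambda_1^{p-1}, \lambda_2^{p-1}, \ldots, \lambda_s^{p-1}) \vdash (p-1)d,$$ the partition in which each $\lambda_i$ appears exactly $p-1$ times. Then $m(\hat{\lambda})=(p-1)\lambda$, where $m$ is the Mullineux map.
   Context: For a partition $\nu$ and a positive integer $c$, $c\nu$ multiplies every part by $c$. A partition is $p$-regular if no part occurs $p$ or more times. For a $p$-regular partition $\nu$ of $n$, let $D^\nu$ be the simple module over $k\Sigma_n$ ($k$ algebraically closed of characteristic $p$) that is the head of the Specht module $S^\nu$. The Mullineux map $m$ is the bijection on $p$-regular partitions of $n$ defined by $D^\nu \otimes \operatorname{sgn} \cong D^{m(\nu)}$, where $\operatorname{sgn}$ is the sign representation (equivalently, the combinatorial Mullineux bijection). *)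

theory Defs
  imports "HOL-Computational_Algebra.Primes"
begin

text \<open>Row i (0-indexed) has length l!i.  Combinatorial Mullineux map via p-rims
  and Mullineux symbols (Mullineux 1979; Bessenrodt--Olsson).\<close>

definition is_partition :: "nat list \<Rightarrow> bool" where
  "is_partition l \<longleftrightarrow> sorted_wrt (\<ge>) l \<and> (\<forall>x\<in>set l. 0 < x)"

definition p_regular :: "nat \<Rightarrow> nat list \<Rightarrow> bool" where
  "p_regular p l \<longleftrightarrow> (\<forall>x\<in>set l. count_list l x < p)"

text \<open>Number of p-rim nodes in each row.  The rim of row i consists of
  l!i - l!(i+1) + 1 nodes (all l!i nodes for the last row); the p-rim is cut
  into p-segments, each taking p consecutive rim nodes (walking from the top
  right), the next segment starting at the rightmost node of the row below the
  row where the previous segment ended.  k = nodes still to take in the current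
  segment.\<close>
fun prim :: "nat \<Rightarrow> nat \<Rightarrow> nat list \<Rightarrow> nat list" where
  "prim p k [] = []"
| "prim p k (x # xs) =
     (let c = (case xs of [] \<Rightarrow> x | y # _ \<Rightarrow> if 0 < y then x - y + 1 else x)
      in if c < k then c # prim p (k - c) xs else k # prim p p xs)"

definition remove_prim :: "nat \<Rightarrow> nat list \<Rightarrow> nat list" where
  "remove_prim p l = filter (\<lambda>x. 0 < x) (map2 (-) l (prim p p l))"

primrec msym_aux :: "nat \<Rightarrow> nat \<Rightarrow> nat list \<Rightarrow> (nat \<times> nat) list" where
  "msym_aux p 0 l = []"
| "msym_aux p (Suc n) l =
     (if l = [] then []
      else (sum_list (prim p p l), length l) # msym_aux p n (remove_prim p l))"

text \<open>Mullineux symbol: list of columns (a_i, r_i), a_i = size of the i-th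
  p-rim, r_i = number of rows of the i-th partition in the sequence.\<close>
definition mullineux_symbol :: "nat \<Rightarrow> nat list \<Rightarrow> (nat \<times> nat) list" where
  "mullineux_symbol p l = msym_aux p (sum_list l) l"

definition mullineux :: "nat \<Rightarrow> nat list \<Rightarrow> nat list" where
  "mullineux p l = (THE mu. is_partition mu \<and> p_regular p mu \<and>
      sum_list mu = sum_list l \<and>
      mullineux_symbol p mu =
        map (\<lambda>(a, r). (a, a + (if p dvd a then 0 else 1) - r)) (mullineux_symbol p l))"

end

theory Submission
  imports Defs
begin

lemma prim_length[simp]: "length (prim p k l) = length l"
  by (induction p k l rule: prim.induct) (auto simp: Let_def split: list.splits)

lemma prim_S2:
  assumes "n < k" "0 < a"
  shows "prim p k (replicate n a @ a # ys) = replicate n 1 @ prim p (k - n) (a # ys)"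
  using assms
proof (induction n arbitrary: k)
  case 0 then show ?case by simp
next
  case (Suc n)
  have "prim p k (replicate (Suc n) a @ a # ys) = prim p k (a # (replicate n a @ a # ys))" by simp
  also have "\<dots> = 1 # prim p (k - 1) (replicate n a @ a # ys)"
    using Suc.prems by (cases n) (auto simp: Let_def)
  also have "\<dots> = 1 # replicate n 1 @ prim p (k - 1 - n) (a # ys)"
    using Suc.prems Suc.IH[of "k-1"] by simp
  finally show ?case by (simp add: diff_diff_add)
qed

lemma prim_cons2: "0 < b \<Longrightarrow> prim p k (a # b # ys) =
   (if a - b + 1 < k then (a - b + 1) # prim p (k - (a - b + 1)) (b # ys) else k # prim p p (b # ys))"
  by (simp add: Let_def)

lemma prim_single: "prim p k [a] = (if a < k then [a] else [k])"
  by simp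


declare prim.simps(2)[simp del] prim_single[simp]

lemma prim_cases:
  assumes "0 < y"
  obtains "x - y + 1 < k" "prim p k (x # y # ys) = (x - y + 1) # prim p (k - (x - y + 1)) (y # ys)"
   | "\<not> x - y + 1 < k" "prim p k (x # y # ys) = k # prim p p (y # ys)"
  using assms by (cases "x - y + 1 < k") (simp_all add: prim_cons2)

lemma prim_le_row:
  "\<forall>v\<in>set l. 0 < v \<Longrightarrow> list_all2 (\<lambda>m t. t \<le> m) l (prim p k l)"
proof (induction l arbitrary: k)
  case Nil then show ?case by simp
next
  case (Cons x xs)
  show ?case
  proof (cases xs)
    case Nil then show ?thesis using Cons.prems by simp
  next
    fix y ys assume xs: "xs = y # ys"
    have y0: "0 < y" "0 < x" using Cons.prems xs by auto
    have IH: "\<And>k. list_all2 (\<lambda>m t. t \<le> m) xs (prim p k xs)" using Cons by simp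
    show ?thesis
      by (rule prim_cases[OF y0(1), of x k p ys]) (use IH y0 xs in auto)
  qed
qed

lemma prim_le_p: "k \<le> p \<Longrightarrow> \<forall>v\<in>set l. 0 < v \<Longrightarrow> \<forall>t\<in>set (prim p k l). t \<le> p"
proof (induction l arbitrary: k)
  case Nil then show ?case by simp
next
  case (Cons x xs)
  show ?case
  proof (cases xs)
    case Nil then show ?thesis using Cons.prems by simp
  next
    fix y ys assume xs: "xs = y # ys"
    have y0: "0 < y" using Cons.prems xs by auto
    have p1: "\<forall>v\<in>set xs. 0 < v" using Cons.prems by auto
    show ?thesis
    proof (rule prim_cases[OF y0, of x k p ys])
      assume "x - y + 1 < k" and e: "prim p k (x # y # ys) = (x - y + 1) # prim p (k - (x - y + 1)) (y # ys)"
      have "\<forall>t\<in>set (prim p (k - (x - y + 1)) xs). t \<le> p" using Cons.IH[OF _ p1, of "k - (x - y + 1)"] Cons.prems by simp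
      then show ?thesis using e xs Cons.prems \<open>x - y + 1 < k\<close> by auto
    next
      assume e: "prim p k (x # y # ys) = k # prim p p (y # ys)"
      have "\<forall>t\<in>set (prim p p xs). t \<le> p" using Cons.IH[OF _ p1, of p] by simp
      then show ?thesis using e xs Cons.prems by auto
    qed
  qed
qed

lemma prim_pos: "0 < k \<Longrightarrow> 0 < p \<Longrightarrow> \<forall>v\<in>set l. 0 < v \<Longrightarrow> \<forall>t\<in>set (prim p k l). 0 < t"
proof (induction l arbitrary: k)
  case Nil then show ?case by simp
next
  case (Cons x xs)
  show ?case
  proof (cases xs)
    case Nil then show ?thesis using Cons.prems by simp
  next
    fix y ys assume xs: "xs = y # ys"
    have y0: "0 < y" "0 < x" using Cons.prems xs by auto
    have p1: "\<forall>v\<in>set xs. 0 < v" using Cons.prems by auto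
    show ?thesis
    proof (rule prim_cases[OF y0(1), of x k p ys])
      assume lt: "x - y + 1 < k" and e: "prim p k (x # y # ys) = (x - y + 1) # prim p (k - (x - y + 1)) (y # ys)"
      have "\<forall>t\<in>set (prim p (k - (x - y + 1)) xs). 0 < t" using Cons.IH[OF _ _ p1, of "k - (x - y + 1)"] Cons.prems lt by simp
      then show ?thesis using e xs by simp
    next
      assume e: "prim p k (x # y # ys) = k # prim p p (y # ys)"
      have "\<forall>t\<in>set (prim p p xs). 0 < t" using Cons.IH[OF _ _ p1, of p] Cons.prems by simp
      then show ?thesis using e xs Cons.prems by simp
    qed
  qed
qed

lemma sum_map2_minus:
  "list_all2 (\<lambda>m t. t \<le> m) xs ys \<Longrightarrow> sum_list (map2 (-) xs ys) + sum_list ys = sum_list (xs::nat list)"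
  by (induction rule: list_all2_induct) auto

lemma prim_sorted_step:
  assumes "sorted_wrt (\<ge>) (map2 (-) (y # ys) (prim p k' (y # ys)))"
    "\<forall>v\<in>set (y#ys). 0 < v" "0 < k'" "0 < p" "t \<le> x - y + 1" "0 < y" "y \<le> x"
  shows "sorted_wrt (\<ge>) (map2 (-) (x # y # ys) (t # prim p k' (y # ys)))"
proof -
  obtain t2 ts where t2: "prim p k' (y # ys) = t2 # ts"
    using prim_length[of p k' "y#ys"] by (cases "prim p k' (y # ys)") auto
  have "0 < t2" using prim_pos[OF assms(3,4,2)] t2 by auto
  then have hd2: "y - t2 \<le> x - t" using assms(5,6,7) by simp
  let ?L = "map2 (-) (y # ys) (t2 # ts)"
  have s1: "sorted_wrt (\<ge>) ?L" using assms(1) t2 by simp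
  have "\<forall>b\<in>set ?L. b \<le> x - t"
  proof
    fix b assume "b \<in> set ?L"
    then have "b = y - t2 \<or> b \<in> set (map2 (-) ys ts)" by auto
    then show "b \<le> x - t" using s1 hd2 by auto
  qed
  then show ?thesis using s1 t2 by simp
qed

lemma prim_sorted:
  assumes "sorted_wrt (\<ge>) l" "\<forall>v\<in>set l. 0 < v" "0 < k" "0 < p"
  shows "sorted_wrt (\<ge>) (map2 (-) l (prim p k l))"
  using assms
proof (induction l arbitrary: k)
  case Nil then show ?case by simp
next
  case (Cons x xs)
  show ?case
  proof (cases xs)
    case Nil then show ?thesis by simp
  next
    fix y ys assume xs: "xs = y # ys"
    have y0: "0 < y" "y \<le> x" using Cons.prems(1,2) xs by auto
    have sxs: "sorted_wrt (\<ge>) xs" "\<forall>v\<in>set xs. 0 < v" using Cons.prems by auto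
    show ?thesis
    proof (rule prim_cases[OF y0(1), of x k p ys])
      assume True: "x - y + 1 < k" and e: "prim p k (x # y # ys) = (x - y + 1) # prim p (k - (x - y + 1)) (y # ys)"
      have IH: "sorted_wrt (\<ge>) (map2 (-) (y # ys) (prim p (k - (x - y + 1)) (y # ys)))"
        using Cons.IH[OF sxs, of "k - (x - y + 1)"] True Cons.prems xs by simp
      have p2: "\<forall>v\<in>set (y # ys). 0 < v" using sxs xs by simp
      show ?thesis unfolding xs e
        by (rule prim_sorted_step[OF IH p2]) (use True Cons.prems y0 in simp_all)
    next
      assume False: "\<not> x - y + 1 < k" and e: "prim p k (x # y # ys) = k # prim p p (y # ys)"
      have IH: "sorted_wrt (\<ge>) (map2 (-) (y # ys) (prim p p (y # ys)))"
        using Cons.IH[OF sxs, of p] Cons.prems xs by simp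
      have p2: "\<forall>v\<in>set (y # ys). 0 < v" using sxs xs by simp
      show ?thesis unfolding xs e
        by (rule prim_sorted_step[OF IH p2]) (use False Cons.prems y0 in simp_all)
    qed
  qed
qed

lemma prim_count:
  assumes "l \<noteq> []" "\<forall>v\<in>set l. 0 < v" "0 < k" "k \<le> p"
  shows "\<exists>C d. sum_list (prim p k l) + d = p * C + k \<and> C < length l \<and> last (prim p k l) + d \<le> p \<and> d < p"
  using assms
proof (induction l arbitrary: k)
  case Nil then show ?case by simp
next
  case (Cons x xs)
  show ?case
  proof (cases xs)
    case Nil
    show ?thesis
    proof (cases "x < k")
      case True then show ?thesis using Nil Cons.prems
        by (intro exI[of _ 0] exI[of _ "k - x"]) auto
    next
      case False then show ?thesis using Nil Cons.prems
        by (intro exI[of _ 0] exI[of _ 0]) auto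
    qed
  next
    fix y ys assume xs: "xs = y # ys"
    have y0: "0 < y" using Cons.prems xs by auto
    have pxs: "xs \<noteq> []" "\<forall>v\<in>set xs. 0 < v" using Cons.prems xs by auto
    have ne: "\<And>k. prim p k xs \<noteq> []" using xs by (metis list.distinct(1) prim_length length_0_conv)
    show ?thesis
    proof (rule prim_cases[OF y0, of x k p ys])
      assume True: "x - y + 1 < k" and e: "prim p k (x # y # ys) = (x - y + 1) # prim p (k - (x - y + 1)) (y # ys)"
      have "\<exists>C d. sum_list (prim p (k - (x - y + 1)) xs) + d = p * C + (k - (x - y + 1)) \<and> C < length xs \<and>
          last (prim p (k - (x - y + 1)) xs) + d \<le> p \<and> d < p"
        using Cons.IH[OF pxs, of "k - (x - y + 1)"] True Cons.prems by auto
      then obtain C d where "sum_list (prim p (k - (x - y + 1)) xs) + d = p * C + (k - (x - y + 1))" "C < length xs"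
          "last (prim p (k - (x - y + 1)) xs) + d \<le> p" "d < p" by blast
      moreover have "sum_list (prim p k (x # xs)) + d = p * C + k" using calculation True e xs by (simp; linarith)
      moreover have "last (prim p k (x # xs)) + d \<le> p" using calculation e xs ne[of "k - (x - y + 1)"] by simp
      ultimately have "sum_list (prim p k (x # xs)) + d = p * C + k \<and> C < length (x # xs) \<and> last (prim p k (x # xs)) + d \<le> p \<and> d < p" by simp
      then show ?thesis by blast
    next
      assume False: "\<not> x - y + 1 < k" and e: "prim p k (x # y # ys) = k # prim p p (y # ys)"
      obtain C d where "sum_list (prim p p xs) + d = p * C + p" "C < length xs"
          "last (prim p p xs) + d \<le> p" "d < p"
        using Cons.IH[OF pxs, of p] Cons.prems by auto
      moreover have "sum_list (prim p k (x # xs)) + d = p * Suc C + k" using calculation e xs by simp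
      moreover have "last (prim p k (x # xs)) + d \<le> p" using calculation e xs ne[of p] by simp
      ultimately show ?thesis by (metis Suc_less_eq length_Cons)
    qed
  qed
qed


definition Gp :: "nat \<Rightarrow> nat list \<Rightarrow> bool" where
  "Gp p x \<longleftrightarrow> sorted_wrt (\<lambda>a b. b + (p - 1) \<le> a) x \<and> (\<forall>v\<in>set x. 0 < v)"

definition remx :: "nat \<Rightarrow> nat list \<Rightarrow> nat list" where
  "remx p x = filter (\<lambda>y. 0 < y) (map (\<lambda>v. v - p) x)"

lemma prim_G_cons:
  assumes "2 \<le> p" "Gp p (v # w # ys)"
  shows "prim p p (v # w # ys) = p # prim p p (w # ys)"
proof -
  have "w + (p - 1) \<le> v" "0 < w" using assms(2) by (auto simp: Gp_def)
  then show ?thesis using assms(1) by (simp add: prim_cons2)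
qed

lemma Gp_tl: "Gp p (v # ys) \<Longrightarrow> Gp p ys"
  by (simp add: Gp_def)

lemma prim_G_map2:
  assumes "2 \<le> p" "Gp p x"
  shows "map2 (-) x (prim p p x) = map (\<lambda>v. v - p) x"
  using assms(2)
proof (induction x)
  case Nil then show ?case by simp
next
  case (Cons v xs)
  show ?case
  proof (cases xs)
    case Nil then show ?thesis by (cases "v < p") auto
  next
    case (Cons w ys)
    then show ?thesis using Cons.IH Gp_tl[OF Cons.prems] prim_G_cons[OF assms(1)] Cons.prems by simp
  qed
qed

lemma remove_prim_G: "2 \<le> p \<Longrightarrow> Gp p x \<Longrightarrow> remove_prim p x = remx p x"
  by (simp add: remove_prim_def remx_def prim_G_map2)

lemma prim_G_sum:
  assumes "2 \<le> p" "Gp p x" "x \<noteq> []"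
  shows "sum_list (prim p p x) = p * (length x - 1) + min p (last x)"
  using assms(2,3)
proof (induction x)
  case Nil then show ?case by simp
next
  case (Cons v xs)
  show ?case
  proof (cases xs)
    case Nil then show ?thesis by (cases "v < p") auto
  next
    case (Cons w ys)
    then show ?thesis using Cons.IH Gp_tl[OF Cons.prems(1)] prim_G_cons[OF assms(1)] Cons.prems
      by (simp add: algebra_simps)
  qed
qed

lemma remx_eq: "remx p x = map (\<lambda>v. v - p) (filter (\<lambda>v. p < v) x)"
  by (induction x) (auto simp: remx_def)

lemma Gp_remx: "2 \<le> p \<Longrightarrow> Gp p x \<Longrightarrow> Gp p (remx p x)"
proof -
  assume p: "2 \<le> p" and g: "Gp p x"
  let ?f = "filter (\<lambda>v. p < v) x"
  have s: "sorted_wrt (\<lambda>a b. b + (p - 1) \<le> a) ?f" using g sorted_wrt_filter by (auto simp: Gp_def)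
  have "sorted_wrt (\<lambda>a b. (b - p) + (p - 1) \<le> a - p) ?f"
    by (rule sorted_wrt_mono_rel[OF _ s]) auto
  then show ?thesis unfolding remx_eq Gp_def by (auto simp: sorted_wrt_map)
qed


definition blk :: "nat \<Rightarrow> nat \<Rightarrow> nat \<Rightarrow> nat list" where
  "blk p q r = replicate r (Suc q) @ replicate (p - 1 - r) q"

definition spl :: "nat \<Rightarrow> nat \<Rightarrow> nat list" where
  "spl p v = blk p (v div (p - 1)) (v mod (p - 1))"

definition E :: "nat \<Rightarrow> nat list \<Rightarrow> nat list" where
  "E p x = filter (\<lambda>y. 0 < y) (concat (map (spl p) x))"

definition tb :: "nat \<Rightarrow> nat \<Rightarrow> nat list" where
  "tb p r = (if r = 0 then replicate (p - 2) 1 @ [2] else replicate (r - 1) 1 @ 2 # replicate (p - 2 - r) 1 @ [1])"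

lemma spl_eq: "R < p - 1 \<Longrightarrow> spl p ((p - 1) * Q + R) = blk p Q R"
  unfolding spl_def by simp

lemma E_Nil[simp]: "E p [] = []" by (simp add: E_def)
lemma E_Cons: "E p (v # ys) = filter (\<lambda>y. 0 < y) (spl p v) @ E p ys" by (simp add: E_def)

lemma blk_len[simp]: "r < p - 1 \<Longrightarrow> length (blk p q r) = p - 1" by (simp add: blk_def)
lemma blk_sum: assumes "r < p - 1" shows "sum_list (blk p q r) = (p - 1) * q + r"
proof -
  have "sum_list (blk p q r) = r * Suc q + (p - 1 - r) * q" by (simp add: blk_def sum_list_replicate)
  also have "\<dots> = (r + (p - 1 - r)) * q + r" by (simp add: algebra_simps)
  also have "r + (p - 1 - r) = p - 1" using assms by simp
  finally show ?thesis by simp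
qed

lemma rep_Suc_app: "replicate (Suc n) a @ zs = replicate n a @ a # zs"
  by (simp add: replicate_app_Cons_same)
lemma spl_sum: "2 \<le> p \<Longrightarrow> sum_list (spl p v) = v"
  unfolding spl_def by (subst blk_sum) auto

lemma tb_len: "2 \<le> p \<Longrightarrow> r < p - 1 \<Longrightarrow> length (tb p r) = p - 1" by (auto simp: tb_def)
lemma tb_sum: "2 \<le> p \<Longrightarrow> r < p - 1 \<Longrightarrow> sum_list (tb p r) = p" by (auto simp: tb_def sum_list_replicate)

lemma blk_pos: "0 < q \<Longrightarrow> filter (\<lambda>y. 0 < y) (blk p q r) = blk p q r"
  by (auto simp: blk_def)

lemma prim_blk_cons:
  assumes p: "2 \<le> p" and q: "0 < q" and r: "r < p - 1" and h: "0 < h"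
    and g0: "r = 0 \<Longrightarrow> h + 1 \<le> q" and g1: "0 < r \<Longrightarrow> h \<le> q"
  shows "prim p p (blk p q r @ h # ys) = tb p r @ prim p p (h # ys)"
proof (cases "r = 0")
  case True
  have "blk p q r @ h # ys = replicate (p - 2) q @ q # h # ys"
  proof -
    obtain m where m: "p = Suc (Suc m)" using p by (metis add_2_eq_Suc le_Suc_ex)
    show ?thesis using True by (simp add: blk_def m rep_Suc_app replicate_append_same del: replicate_Suc)
  qed
  then have "prim p p (blk p q r @ h # ys) = prim p p (replicate (p - 2) q @ q # h # ys)" by simp
  also have "\<dots> = replicate (p - 2) 1 @ prim p 2 (q # h # ys)"
    using prim_S2[of "p - 2" p q] p q by simp
  also have "prim p 2 (q # h # ys) = 2 # prim p p (h # ys)"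
    using g0[OF True] h by (simp add: prim_cons2)
  finally show ?thesis using True by (simp add: tb_def)
next
  case False
  then have r0: "0 < r" by simp
  define n where "n = p - 2 - r"
  have pn: "p - 1 - r = Suc n" using r r0 by (simp add: n_def)
  define R where "R = replicate n q @ h # ys"
  have "blk p q r @ h # ys = replicate (r - 1) (Suc q) @ Suc q # q # R"
  proof -
    obtain m where m: "r = Suc m" using r0 by (metis Suc_pred)
    show ?thesis using pn by (simp add: blk_def m R_def rep_Suc_app replicate_append_same del: replicate_Suc)
  qed
  then have "prim p p (blk p q r @ h # ys) = prim p p (replicate (r - 1) (Suc q) @ Suc q # q # R)" by simp
  also have "\<dots> = replicate (r - 1) 1 @ prim p (p - (r - 1)) (Suc q # q # R)"
    using prim_S2[of "r - 1" p "Suc q"] r by simp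
  also have "prim p (p - (r - 1)) (Suc q # q # R) = 2 # prim p (p - (r - 1) - 2) (q # R)"
    using q r r0 by (simp add: prim_cons2)
  also have "q # R = replicate n q @ q # h # ys"
    by (simp add: R_def replicate_app_Cons_same)
  also have "prim p (p - (r - 1) - 2) (replicate n q @ q # h # ys) = replicate n 1 @ prim p 1 (q # h # ys)"
    using prim_S2[of n "p - (r - 1) - 2" q] q r r0 by (simp add: n_def)
  also have "prim p 1 (q # h # ys) = 1 # prim p p (h # ys)"
    using h by (simp add: prim_cons2)
  finally show ?thesis using r0 by (simp add: tb_def n_def)
qed

lemma prim_blk_nil:
  assumes p: "2 \<le> p" and q: "0 < q" and r: "r < p - 1"
  shows "prim p p (blk p q r) = (if r = 0 then replicate (p - 2) 1 @ [min 2 q] else tb p r)"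
proof (cases "r = 0")
  case True
  have "blk p q r = replicate (p - 2) q @ [q]"
  proof -
    obtain m where m: "p = Suc (Suc m)" using p by (metis add_2_eq_Suc le_Suc_ex)
    show ?thesis using True by (simp add: blk_def m replicate_append_same)
  qed
  then have "prim p p (blk p q r) = prim p p (replicate (p - 2) q @ [q])" by simp
  also have "\<dots> = replicate (p - 2) 1 @ prim p 2 [q]"
    using prim_S2[of "p - 2" p q] p q by simp
  finally show ?thesis using True by auto
next
  case False
  then have r0: "0 < r" by simp
  define n where "n = p - 2 - r"
  have pn: "p - 1 - r = Suc n" using r r0 by (simp add: n_def)
  define R where "R = replicate n q"
  have "blk p q r = replicate (r - 1) (Suc q) @ Suc q # q # R"
  proof -
    obtain m where m: "r = Suc m" using r0 by (metis Suc_pred)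
    show ?thesis using pn by (simp add: blk_def m R_def replicate_append_same)
  qed
  then have "prim p p (blk p q r) = prim p p (replicate (r - 1) (Suc q) @ Suc q # q # R)" by simp
  also have "\<dots> = replicate (r - 1) 1 @ prim p (p - (r - 1)) (Suc q # q # R)"
    using prim_S2[of "r - 1" p "Suc q"] r by simp
  also have "prim p (p - (r - 1)) (Suc q # q # R) = 2 # prim p (p - (r - 1) - 2) (q # R)"
    using q r r0 by (simp add: prim_cons2)
  also have "q # R = replicate n q @ [q]"
    by (simp add: R_def replicate_append_same)
  also have "prim p (p - (r - 1) - 2) (replicate n q @ [q]) = replicate n 1 @ prim p 1 [q]"
    using prim_S2[of n "p - (r - 1) - 2" q] q r r0 by (simp add: n_def)
  finally show ?thesis using r0 q by (simp add: tb_def n_def)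
qed


lemma map2_rep: "map2 f (replicate n a) (replicate n b) = replicate n (f a b)"
  by (induction n) auto

lemma blk_r0: "2 \<le> p \<Longrightarrow> blk p q 0 = replicate (p - 2) q @ [q]"
proof -
  assume p: "2 \<le> p"
  obtain m where m: "p = Suc (Suc m)" using p by (metis add_2_eq_Suc le_Suc_ex)
  show ?thesis by (simp add: blk_def m replicate_append_same)
qed

lemma map2_blk0:
  assumes "2 \<le> p" "2 \<le> q"
  shows "map2 (-) (blk p q 0) (tb p 0) = blk p (q - 2) (p - 2)"
proof -
  have "map2 (-) (blk p q 0) (tb p 0) = replicate (p - 2) (q - 1) @ [q - 2]"
    using assms by (simp add: blk_r0 tb_def zip_append map2_rep)
  also have "\<dots> = blk p (q - 2) (p - 2)"
    using assms by (simp add: blk_def numeral_2_eq_2 Suc_diff_Suc)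
  finally show ?thesis .
qed

lemma map2_blk:
  assumes "2 \<le> p" "1 \<le> q" "0 < r" "r < p - 1"
  shows "map2 (-) (blk p q r) (tb p r) = blk p (q - 1) (r - 1)"
proof -
  obtain m where m: "r = Suc m" using assms(3) by (metis Suc_pred)
  define n where "n = p - 2 - r"
  have pn: "p - 1 - r = Suc n" using assms by (simp add: n_def)
  have b: "blk p q r = replicate m (Suc q) @ Suc q # replicate n q @ [q]"
    using pn by (simp add: blk_def m rep_Suc_app replicate_append_same del: replicate_Suc) simp
  have t: "tb p r = replicate m 1 @ 2 # replicate n 1 @ [1]" by (simp add: tb_def m n_def)
  have "map2 (-) (blk p q r) (tb p r) = replicate m q @ (q - 1) # replicate n (q - 1) @ [q - 1]"
    unfolding b t by (simp add: zip_append map2_rep)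
  also have "\<dots> = blk p (q - 1) (r - 1)"
  proof -
    have pm: "p - Suc m = Suc (Suc n)" using pn m assms by linarith
    show ?thesis using pm assms(2) by (simp add: blk_def m replicate_append_same)
  qed
  finally show ?thesis .
qed

lemma spl_minus0:
  assumes "2 \<le> p" "2 \<le> q"
  shows "spl p ((p - 1) * q - p) = blk p (q - 2) (p - 2)"
proof -
  obtain q' where q: "q = Suc (Suc q')" using assms(2) by (metis add_2_eq_Suc le_Suc_ex)
  obtain m where m: "p = Suc (Suc m)" using assms(1) by (metis add_2_eq_Suc le_Suc_ex)
  have "(p - 1) * q - p = (p - 1) * (q - 2) + (p - 2)" by (simp add: q m algebra_simps)
  then show ?thesis using spl_eq[of "p - 2" p "q - 2"] m by simp
qed

lemma spl_minus:
  assumes "2 \<le> p" "1 \<le> q" "0 < r" "r < p - 1"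
  shows "spl p ((p - 1) * q + r - p) = blk p (q - 1) (r - 1)"
proof -
  obtain q' where q: "q = Suc q'" using assms(2) by (metis Suc_pred less_eq_Suc_le One_nat_def)
  have "(p - 1) * q + r - p = (p - 1) * (q - 1) + (r - 1)" using assms by (simp add: q algebra_simps)
  then show ?thesis using spl_eq[of "r - 1" p "q - 1"] assms by simp
qed

lemma E_head:
  assumes "2 \<le> p" "0 < w"
  shows "\<exists>rest. E p (w # ys) = (w div (p - 1) + (if w mod (p - 1) = 0 then 0 else 1)) # rest"
proof -
  define q where "q = w div (p - 1)"
  define r where "r = w mod (p - 1)"
  have r: "r < p - 1" using assms by (simp add: r_def)
  have w: "w = (p - 1) * q + r" by (simp add: q_def r_def)
  have sp: "spl p w = blk p q r" by (simp add: spl_def q_def r_def)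
  show ?thesis
  proof (cases "q = 0")
    case True
    then have "r = w" using w by simp
    then obtain r' where r': "r = Suc r'" using assms(2) by (cases r) auto
    have "filter (\<lambda>y. 0 < y) (spl p w) = replicate r 1"
      using True sp by (simp add: blk_def)
    then have "E p (w # ys) = 1 # (replicate r' 1 @ E p ys)" by (simp add: E_Cons r')
    then show ?thesis using True r' unfolding q_def r_def by simp
  next
    case False
    have "filter (\<lambda>y. 0 < y) (spl p w) = spl p w" using False sp by (simp add: blk_pos)
    obtain n where n: "p - 1 - r = Suc n" using r by (metis Suc_diff_Suc diff_Suc_1 less_imp_Suc_add)
    show ?thesis
    proof (cases r)
      case 0
      have "E p (w # ys) = q # (replicate n q @ E p ys)"
        using \<open>filter _ (spl p w) = spl p w\<close> sp n 0 by (simp add: E_Cons blk_def)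
      then show ?thesis using 0 unfolding q_def r_def by simp
    next
      case (Suc r')
      have "E p (w # ys) = Suc q # (replicate r' (Suc q) @ replicate (p - 1 - r) q @ E p ys)"
        using \<open>filter _ (spl p w) = spl p w\<close> sp Suc by (simp add: E_Cons blk_def)
      then show ?thesis using Suc unfolding q_def r_def by simp
    qed
  qed
qed

lemma gap_arith:
  fixes p q r qw rw :: nat
  assumes "(p - 1) * qw + rw + (p - 1) \<le> (p - 1) * q + r" "r < p - 1" "rw < p - 1"
  shows "(r = 0 \<longrightarrow> qw + (if rw = 0 then 0 else 1) + 1 \<le> q) \<and> (0 < r \<longrightarrow> qw + (if rw = 0 then 0 else 1) \<le> q)"
proof -
  have q1: "qw + 1 \<le> q"
  proof (rule ccontr)
    assume "\<not> qw + 1 \<le> q"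
    then have "q \<le> qw" by simp
    then have "(p - 1) * q \<le> (p - 1) * qw" by (rule mult_le_mono2)
    then show False using assms(1,2) by linarith
  qed
  have q2: "qw + 2 \<le> q" if "r = 0" "rw \<noteq> 0"
  proof (rule ccontr)
    assume "\<not> qw + 2 \<le> q"
    then have "q = qw + 1" using q1 by simp
    then have "(p - 1) * q = (p - 1) * qw + (p - 1)" by (simp add: distrib_left)
    then show False using assms(1) that by linarith
  qed
  show ?thesis using q1 q2 by auto
qed


lemma Eremx_cons: "E p (remx p (v # ys)) = filter (\<lambda>y. 0 < y) (spl p (v - p)) @ E p (remx p ys)"
proof (cases "p < v")
  case True then show ?thesis by (simp add: remx_def E_Cons)
next
  case False
  then have "v - p = 0" by simp
  moreover have "filter (\<lambda>y. 0 < y) (spl p 0) = []" by (simp add: spl_def blk_def)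
  ultimately show ?thesis using False by (simp add: remx_def)
qed

lemma blk_step:
  assumes p: "2 \<le> p" and q: "1 \<le> v div (p - 1)" and q2: "v mod (p - 1) = 0 \<Longrightarrow> 2 \<le> v div (p - 1)"
  shows "map2 (-) (blk p (v div (p - 1)) (v mod (p - 1))) (tb p (v mod (p - 1))) = spl p (v - p)"
proof -
  define q where "q = v div (p - 1)"
  define r where "r = v mod (p - 1)"
  have r: "r < p - 1" using p by (simp add: r_def)
  have v: "v = (p - 1) * q + r" by (simp add: q_def r_def)
  show ?thesis
  proof (cases "r = 0")
    case True
    then have "2 \<le> q" using q2 by (simp add: q_def r_def)
    then show ?thesis using map2_blk0[OF p] spl_minus0[OF p] True v
      unfolding q_def[symmetric] r_def[symmetric] by simp
  next
    case False
    then show ?thesis using map2_blk[OF p _ _ r] spl_minus[OF p _ _ r] q v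
      unfolding q_def[symmetric] r_def[symmetric] by simp
  qed
qed

lemma prim_rep1: "0 < v \<Longrightarrow> v < p \<Longrightarrow> prim p p (replicate v 1) = replicate v 1"
proof -
  assume v: "0 < v" "v < p"
  obtain v' where v': "v = Suc v'" using v by (cases v) auto
  have "prim p p (replicate v' 1 @ [1]) = replicate v' 1 @ prim p (p - v') [1]"
    using prim_S2[of v' p 1 p "[]"] v v' by simp
  moreover have "1 < p - v'" using v v' by simp
  ultimately show ?thesis using v v' by (simp add: replicate_append_same)
qed

lemma map2_self: "map2 (-) xs xs = replicate (length xs) (0::nat)"
  by (induction xs) auto

lemma filter_rep0: "filter (\<lambda>y. 0 < y) (replicate n (0::nat)) = []"
  by (induction n) auto

lemma main_E:
  assumes p: "2 \<le> p" and g: "Gp p x" and ne: "x \<noteq> []"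
  shows "sum_list (prim p p (E p x)) = sum_list (prim p p x) \<and>
    length (E p x) + length x = sum_list (prim p p x) + (if p dvd sum_list (prim p p x) then 0 else 1) \<and>
    filter (\<lambda>y. 0 < y) (map2 (-) (E p x) (prim p p (E p x))) = E p (remx p x)"
  using g ne
proof (induction x)
  case Nil then show ?case by simp
next
  case (Cons v xs)
  define q where "q = v div (p - 1)"
  define r where "r = v mod (p - 1)"
  have r: "r < p - 1" using p by (simp add: r_def)
  have vqr: "v = (p - 1) * q + r" by (simp add: q_def r_def)
  have sp: "spl p v = blk p q r" by (simp add: spl_def q_def r_def)
  have v0: "0 < v" using Cons.prems by (simp add: Gp_def)
  show ?case
  proof (cases xs)
    case Nil
    have Ev: "E p (v # xs) = filter (\<lambda>y. 0 < y) (blk p q r)" using Nil sp by (simp add: E_Cons)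
    have Erem: "E p (remx p (v # xs)) = filter (\<lambda>y. 0 < y) (spl p (v - p))" proof -
      have "remx p [] = []" by (simp add: remx_def)
      then show ?thesis using Nil Eremx_cons[of p v "[]"] by simp
    qed
    have px: "prim p p (v # xs) = (if v < p then [v] else [p])" using Nil by simp
    show ?thesis
    proof (cases "q = 0")
      case True
      then have rv: "r = v" using vqr by simp
      then have vp: "v < p" using r by simp
      have E1: "E p (v # xs) = replicate v 1" using Ev True rv by (simp add: blk_def)
      have "\<not> p dvd v" using vp v0 by (auto dest: dvd_imp_le)
      moreover have "filter (\<lambda>y. 0 < y) (spl p (v - p)) = []" using vp by (simp add: spl_def blk_def)
      ultimately show ?thesis using E1 Erem px vp v0 prim_rep1[OF v0 vp] Nil
        by (simp add: map2_self filter_rep0 sum_list_replicate)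
    next
      case False
      have Eb: "E p (v # xs) = blk p q r" using Ev False by (simp add: blk_pos)
      have pb: "prim p p (blk p q r) = (if r = 0 then replicate (p - 2) 1 @ [min 2 q] else tb p r)"
        using prim_blk_nil[OF p _ r] False by simp
      show ?thesis
      proof (cases "r = 0 \<and> q = 1")
        case True
        then have vp: "v = p - 1" using vqr by simp
        have pb1: "prim p p (blk p q r) = replicate (p - 1) 1"
          proof -
          obtain m where m: "p = Suc (Suc m)" using p by (metis add_2_eq_Suc le_Suc_ex)
          show ?thesis using pb True by (simp add: m replicate_append_same)
        qed
        have bl: "blk p q r = replicate (p - 1) 1" using True by (simp add: blk_def)
        have "\<not> p dvd (p - 1)"
        proof
          assume "p dvd (p - 1)"
          moreover have "0 < p - 1" "p - 1 < p" using p by auto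
          ultimately show False by (auto dest: dvd_imp_le)
        qed
        moreover have "filter (\<lambda>y. 0 < y) (spl p (v - p)) = []" using vp by (simp add: spl_def blk_def)
        ultimately show ?thesis using Eb Erem px vp pb1 bl Nil p
          by (simp add: map2_self filter_rep0 sum_list_replicate)
      next
        case False2: False
        have pt: "prim p p (blk p q r) = tb p r" using pb False2 False
          by (cases "r = 0") (auto simp: tb_def)
        have vge: "p \<le> v"
        proof (cases "r = 0")
          case True
          then have "2 \<le> q" using False2 False by simp
          then have "(p - 1) * 2 \<le> (p - 1) * q" by (rule mult_le_mono2)
          then show ?thesis using vqr True p by linarith
        next
          case False
          have "(p - 1) * 1 \<le> (p - 1) * q" using \<open>q \<noteq> 0\<close> by (intro mult_le_mono2) simp
          then show ?thesis using vqr False by linarith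
        qed
        have st: "map2 (-) (blk p q r) (tb p r) = spl p (v - p)"
          using blk_step[OF p, of v] False False2 unfolding q_def r_def by auto
        have "p dvd p" by simp
        then show ?thesis using Eb Erem px vge pt st tb_sum[OF p r] tb_len[OF p r] blk_len[OF r] Nil p
          by auto
      qed
    qed
  next
    case (Cons w ys)
    have gxs: "Gp p xs" using Cons.prems(1) by (rule Gp_tl)
    have w0: "0 < w" using gxs Cons by (simp add: Gp_def)
    have gap: "w + (p - 1) \<le> v" using Cons.prems(1) Cons by (simp add: Gp_def)
    define qw where "qw = w div (p - 1)"
    define rw where "rw = w mod (p - 1)"
    have rw: "rw < p - 1" using p by (simp add: rw_def)
    have wqr: "w = (p - 1) * qw + rw" by (simp add: qw_def rw_def)
    define h where "h = qw + (if rw = 0 then 0 else 1)"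
    obtain rest where Exs: "E p xs = h # rest" using E_head[OF p w0, of ys] Cons unfolding h_def qw_def rw_def by auto
    have h0: "0 < h" using w0 wqr by (cases "rw = 0") (auto simp: h_def)
    have ga: "(r = 0 \<longrightarrow> h + 1 \<le> q) \<and> (0 < r \<longrightarrow> h \<le> q)"
      using gap_arith[of p qw rw q r] gap vqr wqr r rw unfolding h_def by simp
    have q1: "1 \<le> q" using ga h0 by (cases "r = 0") auto
    have Ev: "E p (v # xs) = blk p q r @ h # rest" using sp Exs q1 by (simp add: E_Cons blk_pos)
    have pE: "prim p p (E p (v # xs)) = tb p r @ prim p p (E p xs)"
      using prim_blk_cons[OF p _ r h0] ga q1 Ev Exs by simp
    have px: "prim p p (v # xs) = p # prim p p xs" using prim_G_cons[OF p] Cons.prems(1) Cons by simp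
    have IH: "sum_list (prim p p (E p xs)) = sum_list (prim p p xs) \<and>
      length (E p xs) + length xs = sum_list (prim p p xs) + (if p dvd sum_list (prim p p xs) then 0 else 1) \<and>
      filter (\<lambda>y. 0 < y) (map2 (-) (E p xs) (prim p p (E p xs))) = E p (remx p xs)"
      using Cons.IH[OF gxs] Cons by simp
    have st: "map2 (-) (blk p q r) (tb p r) = spl p (v - p)"
      using blk_step[OF p, of v] ga q1 h0 unfolding q_def r_def by auto
    have Ev2: "E p (v # xs) = blk p q r @ E p xs" using Ev Exs by simp
    have m3: "map2 (-) (E p (v # xs)) (prim p p (E p (v # xs))) =
        map2 (-) (blk p q r) (tb p r) @ map2 (-) (E p xs) (prim p p (E p xs))"
      unfolding pE unfolding Ev2 using tb_len[OF p r] blk_len[OF r] r by (simp add: zip_append)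
    have dv: "p dvd (p + sum_list (prim p p xs)) \<longleftrightarrow> p dvd sum_list (prim p p xs)" by simp
    show ?thesis using IH m3 st pE px Ev2 tb_sum[OF p r] r dv p Eremx_cons[of p v xs]
      by (simp add: blk_pos)
  qed
qed


lemma sum_filter_pos: "sum_list (filter (\<lambda>y. 0 < y) xs) = sum_list (xs::nat list)"
  by (induction xs) auto

lemma E_sum: "2 \<le> p \<Longrightarrow> sum_list (E p x) = sum_list x"
  by (induction x) (simp_all add: E_Cons sum_filter_pos spl_sum)

lemma E_ne: "2 \<le> p \<Longrightarrow> Gp p x \<Longrightarrow> x \<noteq> [] \<Longrightarrow> E p x \<noteq> []"
proof -
  assume p: "2 \<le> p" and g: "Gp p x" and ne: "x \<noteq> []"
  have "0 < sum_list x" using g ne by (cases x) (auto simp: Gp_def)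
  show ?thesis
  proof
    assume "E p x = []"
    then have "sum_list x = 0" using E_sum[OF p, of x] by simp
    then show False using \<open>0 < sum_list x\<close> by linarith
  qed
qed

lemma Gp_ne_prim: "2 \<le> p \<Longrightarrow> Gp p x \<Longrightarrow> x \<noteq> [] \<Longrightarrow> 0 < sum_list (prim p p x)"
proof -
  assume p: "2 \<le> p" and g: "Gp p x" and ne: "x \<noteq> []"
  have "0 < last x" using g ne by (auto simp: Gp_def)
  then show ?thesis using prim_G_sum[OF p g ne] p by simp
qed

lemma sym_E:
  assumes p: "2 \<le> p"
  shows "Gp p x \<Longrightarrow> msym_aux p n x = map (\<lambda>(a, r). (a, a + (if p dvd a then 0 else 1) - r)) (msym_aux p n (E p x))"
proof (induction n arbitrary: x)
  case 0 then show ?case by simp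
next
  case (Suc n)
  show ?case
  proof (cases "x = []")
    case True then show ?thesis by simp
  next
    case False
    have M: "sum_list (prim p p (E p x)) = sum_list (prim p p x) \<and>
      length (E p x) + length x = sum_list (prim p p x) + (if p dvd sum_list (prim p p x) then 0 else 1) \<and>
      filter (\<lambda>y. 0 < y) (map2 (-) (E p x) (prim p p (E p x))) = E p (remx p x)"
      using main_E[OF p Suc.prems False] .
    have rE: "remove_prim p (E p x) = E p (remx p x)" using M by (simp add: remove_prim_def)
    have rx: "remove_prim p x = remx p x" using remove_prim_G[OF p Suc.prems] .
    have IH: "msym_aux p n (remx p x) = map (\<lambda>(a, r). (a, a + (if p dvd a then 0 else 1) - r)) (msym_aux p n (E p (remx p x)))"
      using Suc.IH[OF Gp_remx[OF p Suc.prems]] .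
    have En: "E p x \<noteq> []" using E_ne[OF p Suc.prems False] .
    show ?thesis using M rE rx IH En False by (simp; auto split: if_splits)
  qed
qed

lemma sorted_zero_suffix:
  "sorted_wrt (\<ge>) (xs::nat list) \<Longrightarrow> xs = filter (\<lambda>y. 0 < y) xs @ replicate (length xs - length (filter (\<lambda>y. 0 < y) xs)) 0"
proof (induction xs)
  case Nil then show ?case by simp
next
  case (Cons y ys)
  show ?case
  proof (cases "0 < y")
    case True
    have "length (filter (\<lambda>y. 0 < y) ys) \<le> length ys" by simp
    then show ?thesis using Cons True by (simp add: Suc_diff_le)
  next
    case False
    then have "\<forall>z\<in>set ys. z = 0" using Cons.prems by auto
    then have "ys = replicate (length ys) 0" by (simp add: replicate_length_same)
    moreover have "filter (\<lambda>y. 0 < y) ys = []" using \<open>\<forall>z\<in>set ys. z = 0\<close> by (simp add: filter_empty_conv)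
    ultimately show ?thesis using False by simp
  qed
qed

lemma sorted_filter_eq:
  assumes "sorted_wrt (\<ge>) (u::nat list)" "sorted_wrt (\<ge>) w" "length u = length w"
    "filter (\<lambda>y. 0 < y) u = filter (\<lambda>y. 0 < y) w"
  shows "u = w"
  using sorted_zero_suffix[OF assms(1)] sorted_zero_suffix[OF assms(2)] assms(3,4) by metis

lemma sum_le_pw:
  "length a = length b \<Longrightarrow> (\<forall>i<length a. a ! i \<le> b ! i) \<Longrightarrow> sum_list a \<le> sum_list (b::nat list)"
proof (induction a arbitrary: b)
  case Nil then show ?case by simp
next
  case (Cons y ys)
  then obtain z zs where b: "b = z # zs" by (cases b) auto
  have h: "y \<le> z" using Cons.prems(2) b by force
  have t: "\<forall>i<length ys. ys ! i \<le> zs ! i" using Cons.prems(2) b by force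
  have "sum_list ys \<le> sum_list zs" using Cons.IH[OF _ t] Cons.prems(1) b by simp
  then show ?case using h b by simp
qed

lemma le_sum_eq:
  "length a = length b \<Longrightarrow> (\<forall>i<length a. a ! i \<le> b ! i) \<Longrightarrow> sum_list a = sum_list (b::nat list) \<Longrightarrow> a = b"
proof (induction a arbitrary: b)
  case Nil then show ?case by simp
next
  case (Cons y ys)
  then obtain z zs where b: "b = z # zs" by (cases b) auto
  have h: "y \<le> z" using Cons.prems(2) b by force
  have t: "\<forall>i<length ys. ys ! i \<le> zs ! i" using Cons.prems(2) b by force
  have l: "length ys = length zs" using Cons.prems(1) b by simp
  have "sum_list ys \<le> sum_list zs" using sum_le_pw[OF l t] .
  then have "y = z" "sum_list ys = sum_list zs" using h b Cons.prems(3) by auto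
  then show ?case using Cons.IH[OF l t] b by simp
qed


lemma remove_prim_partition:
  assumes "is_partition mu" "2 \<le> p"
  shows "is_partition (remove_prim p mu) \<and> sum_list (remove_prim p mu) + sum_list (prim p p mu) = sum_list mu"
proof -
  have s: "sorted_wrt (\<ge>) mu" and pos: "\<forall>v\<in>set mu. 0 < v" using assms(1) by (auto simp: is_partition_def)
  have "sorted_wrt (\<ge>) (map2 (-) mu (prim p p mu))" using prim_sorted[OF s pos] assms(2) by simp
  then have "is_partition (remove_prim p mu)"
    unfolding is_partition_def remove_prim_def by (auto intro: sorted_wrt_filter)
  moreover have "sum_list (remove_prim p mu) + sum_list (prim p p mu) = sum_list mu"
    unfolding remove_prim_def sum_filter_pos using sum_map2_minus[OF prim_le_row[OF pos]] .
  ultimately show ?thesis by simp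
qed

lemma step_unique:
  assumes p: "2 \<le> p" and g: "Gp p x" and ne: "x \<noteq> []" and mu: "is_partition mu"
    and len: "length mu = length x" and a: "sum_list (prim p p mu) = sum_list (prim p p x)"
    and rm: "remove_prim p mu = remx p x"
  shows "mu = x"
proof -
  define t where "t = prim p p mu"
  define u where "u = map2 (-) mu t"
  define w where "w = map (\<lambda>v. v - p) x"
  have s: "sorted_wrt (\<ge>) mu" and pos: "\<forall>v\<in>set mu. 0 < v" using mu by (auto simp: is_partition_def)
  have lt: "length t = length mu" by (simp add: t_def)
  have us: "sorted_wrt (\<ge>) u" unfolding u_def t_def using prim_sorted[OF s pos] p by simp
  have gs: "sorted_wrt (\<lambda>a b. b + (p - 1) \<le> a) x" and gpos: "\<forall>v\<in>set x. 0 < v" using g by (auto simp: Gp_def)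
  have "sorted_wrt (\<lambda>a b. b - p \<le> a - p) x" by (rule sorted_wrt_mono_rel[OF _ gs]) auto
  then have ws: "sorted_wrt (\<ge>) w" unfolding w_def by (simp add: sorted_wrt_map)
  have "filter (\<lambda>y. 0 < y) u = filter (\<lambda>y. 0 < y) w"
    using rm unfolding remove_prim_def remx_def u_def t_def w_def .
  then have uw: "u = w" using sorted_filter_eq[OF us ws] len lt by (simp add: u_def w_def)
  have tle: "list_all2 (\<lambda>m t. t \<le> m) mu t" unfolding t_def using prim_le_row[OF pos] .
  have tp: "\<forall>s\<in>set t. s \<le> p" unfolding t_def using prim_le_p[OF _ pos, of p p] by simp
  have sum_mu: "sum_list u + sum_list t = sum_list mu" unfolding u_def using sum_map2_minus[OF tle] .
  have sum_x: "sum_list w + sum_list (prim p p x) = sum_list x"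
    using sum_map2_minus[OF prim_le_row[OF gpos], of p p] prim_G_map2[OF p g] unfolding w_def by simp
  have sums: "sum_list mu = sum_list x" using sum_mu sum_x uw a unfolding t_def by simp
  have pw: "\<forall>i<length mu. mu ! i \<le> x ! i"
  proof (intro allI impI)
    fix i assume i: "i < length mu"
    have ui: "mu ! i - t ! i = x ! i - p"
      using uw i len lt unfolding u_def w_def by (metis (no_types, lifting) case_prod_conv length_map length_zip min.idem nth_map nth_zip)
    have ti: "t ! i \<le> mu ! i" using list_all2_nthD[OF tle] i by simp
    have tpi: "t ! i \<le> p" using tp i lt by simp
    show "mu ! i \<le> x ! i"
    proof (cases "p \<le> x ! i")
      case True then show ?thesis using ui ti tpi by linarith
    next
      case False
      then have xi: "x ! i < p" by simp
      have il: "i = length x - 1"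
      proof (rule ccontr)
        assume "i \<noteq> length x - 1"
        then have "i + 1 < length x" using i len by simp
        then have "x ! (i + 1) + (p - 1) \<le> x ! i" using sorted_wrt_nth_less[OF gs, of i "i + 1"] by simp
        moreover have "0 < x ! (i + 1)" using gpos \<open>i + 1 < length x\<close> by simp
        ultimately show False using xi p by linarith
      qed
      have mt: "mu ! i = t ! i" using ui ti xi by simp
      define r where "r = length x"
      have r1: "1 \<le> r" using ne by (simp add: r_def Suc_le_eq)
      have lastx: "last x = x ! i" using il ne by (simp add: last_conv_nth)
      have ax: "sum_list (prim p p x) = p * (r - 1) + x ! i"
        using prim_G_sum[OF p g ne] lastx xi by (simp add: r_def)
      have mune: "mu \<noteq> []" using i by auto
      obtain C d where cd: "sum_list t + d = p * C + p" "C < length mu" "last t + d \<le> p" "d < p"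
        using prim_count[OF mune pos, of p p] p unfolding t_def by auto
      have tne: "t \<noteq> []" using lt mune by auto
      have lastt: "last t = t ! i" using il len lt last_conv_nth[OF tne] by simp
      have xi0: "0 < x ! i" using gpos i len by simp
      have eq: "p * (r - 1) + x ! i + d = p * (C + 1)" using cd(1) a ax unfolding t_def by simp
      have C1: "C + 1 = r"
      proof (rule ccontr)
        assume "C + 1 \<noteq> r"
        then have "C + 1 \<le> r - 1" using cd(2) len by (simp add: r_def)
        then have "p * (C + 1) \<le> p * (r - 1)" by (rule mult_le_mono2)
        then show False using eq xi0 by linarith
      qed
      have "p * (C + 1) = p * C + p" by simp
      moreover have "r - 1 = C" using C1 by simp
      then have "p * (r - 1) = p * C" by simp
      ultimately have "x ! i + d = p" using eq by linarith
      then show ?thesis using mt lastt cd(3) by linarith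
    qed
  qed
  show ?thesis using le_sum_eq[OF len pw sums] .
qed


lemma uni:
  assumes p: "2 \<le> p"
  shows "\<forall>x mu. Gp p x \<longrightarrow> is_partition mu \<longrightarrow> sum_list mu = sum_list x \<longrightarrow> sum_list x \<le> n \<longrightarrow>
    msym_aux p n mu = msym_aux p n x \<longrightarrow> mu = x"
proof (induction n)
  case 0
  show ?case
  proof (intro allI impI)
    fix x mu assume g: "Gp p x" and mu: "is_partition mu" and s: "sum_list mu = sum_list x" and "sum_list x \<le> 0"
    then have "sum_list x = 0" by simp
    then have x: "x = []" using g by (cases x) (auto simp: Gp_def)
    have "sum_list mu = 0" using s \<open>sum_list x = 0\<close> by simp
    then have "mu = []" using mu by (cases mu) (auto simp: is_partition_def)
    then show "mu = x" using x by simp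
  qed
next
  case (Suc n)
  show ?case
  proof (intro allI impI)
    fix x mu assume g: "Gp p x" and mu: "is_partition mu" and s: "sum_list mu = sum_list x"
      and sn: "sum_list x \<le> Suc n" and eq: "msym_aux p (Suc n) mu = msym_aux p (Suc n) x"
    show "mu = x"
    proof (cases "x = []")
      case True
      then have "sum_list mu = 0" using s by simp
      then show ?thesis using mu True by (cases mu) (auto simp: is_partition_def)
    next
      case False
      have "0 < sum_list x" using g False by (cases x) (auto simp: Gp_def)
      have mne: "mu \<noteq> []"
      proof
        assume "mu = []"
        then have "sum_list x = 0" using s by simp
        then show False using \<open>0 < sum_list x\<close> by linarith
      qed
      have e1: "sum_list (prim p p mu) = sum_list (prim p p x)" "length mu = length x"
        and e2: "msym_aux p n (remove_prim p mu) = msym_aux p n (remove_prim p x)"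
      proof -
        have m1: "msym_aux p (Suc n) mu = (sum_list (prim p p mu), length mu) # msym_aux p n (remove_prim p mu)"
          by (subst msym_aux.simps(2)) (rule if_not_P[OF mne])
        have m2: "msym_aux p (Suc n) x = (sum_list (prim p p x), length x) # msym_aux p n (remove_prim p x)"
          by (subst msym_aux.simps(2)) (rule if_not_P[OF False])
        have "(sum_list (prim p p mu), length mu) # msym_aux p n (remove_prim p mu) =
              (sum_list (prim p p x), length x) # msym_aux p n (remove_prim p x)"
          using eq unfolding m1 m2 .
        then have c: "(sum_list (prim p p mu), length mu) = (sum_list (prim p p x), length x)"
          and c2: "msym_aux p n (remove_prim p mu) = msym_aux p n (remove_prim p x)"
          by (simp_all only: list.inject)
        from c show "sum_list (prim p p mu) = sum_list (prim p p x)" "length mu = length x"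
          by (simp_all only: prod.inject)
        from c2 show "msym_aux p n (remove_prim p mu) = msym_aux p n (remove_prim p x)" .
      qed
      have rx: "remove_prim p x = remx p x" using remove_prim_G[OF p g] .
      have RP: "is_partition (remove_prim p mu) \<and> sum_list (remove_prim p mu) + sum_list (prim p p mu) = sum_list mu"
        using remove_prim_partition[OF mu p] .
      have gx: "Gp p x" using g .
      have gpos: "\<forall>v\<in>set x. 0 < v" using g by (simp add: Gp_def)
      have RX: "sum_list (remx p x) + sum_list (prim p p x) = sum_list x"
      proof -
        have "remx p x = filter (\<lambda>y. 0 < y) (map2 (-) x (prim p p x))" using rx by (simp add: remove_prim_def)
        then have "sum_list (remx p x) = sum_list (map2 (-) x (prim p p x))" by (simp add: sum_filter_pos)
        then show ?thesis using sum_map2_minus[OF prim_le_row[OF gpos], of p p] by simp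
      qed
      have apos: "0 < sum_list (prim p p x)" using Gp_ne_prim[OF p g False] .
      have "remove_prim p mu = remx p x"
      proof -
        have P: "is_partition (remove_prim p mu)" using RP by simp
        have S: "sum_list (remove_prim p mu) = sum_list (remx p x)" using RP RX e1(1) s by linarith
        have L: "sum_list (remx p x) \<le> n" using RX apos sn by linarith
        have M: "msym_aux p n (remove_prim p mu) = msym_aux p n (remx p x)" using e2 rx by simp
        show ?thesis using Suc.IH[rule_format, OF Gp_remx[OF p g] P S L M] .
      qed
      then show ?thesis using step_unique[OF p g False mu e1(2) e1(1)] by simp
    qed
  qed
qed

lemma hat_eq:
  assumes p: "2 \<le> p" and pos: "\<forall>x\<in>set lam. 0 < x"
  shows "concat (map (\<lambda>x. replicate (p - 1) x) lam) = E p (map (\<lambda>x. (p - 1) * x) lam)"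
  using pos
proof (induction lam)
  case Nil then show ?case by simp
next
  case (Cons a lam)
  have "spl p ((p - 1) * a) = replicate (p - 1) a"
    using spl_eq[of 0 p a] p by (simp add: blk_def)
  then show ?case using Cons by (simp add: E_Cons)
qed

lemma Gp_mult:
  fixes lam :: "nat list"
  assumes "sorted_wrt (>) lam" "\<forall>x\<in>set lam. 0 < x" "2 \<le> p"
  shows "Gp p (map (\<lambda>x. (p - 1) * x) lam)"
proof -
  have "sorted_wrt (\<lambda>a b. (p - 1) * b + (p - 1) \<le> (p - 1) * a) lam"
  proof (rule sorted_wrt_mono_rel[OF _ assms(1)])
    fix a b :: nat assume "a > b"
    then have "(p - 1) * (b + 1) \<le> (p - 1) * a" by (intro mult_le_mono2) simp
    then show "(p - 1) * b + (p - 1) \<le> (p - 1) * a" by (simp add: distrib_left)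
  qed
  then show ?thesis using assms(2,3) unfolding Gp_def by (auto simp: sorted_wrt_map)
qed

lemma count_strict: "sorted_wrt (\<lambda>a b. b < a) (x::nat list) \<Longrightarrow> count_list x v \<le> 1"
proof (induction x)
  case Nil then show ?case by simp
next
  case (Cons y ys)
  have IH: "count_list ys v \<le> 1" using Cons by simp
  show ?case
  proof (cases "y = v")
    case True
    then have "v \<notin> set ys" using Cons.prems by auto
    then have "count_list ys v = 0" by (simp add: count_list_0_iff)
    then show ?thesis using True by simp
  next
    case False then show ?thesis using IH by simp
  qed
qed

lemma Gp_regular:
  assumes "2 \<le> p" "Gp p x"
  shows "p_regular p x \<and> is_partition x"
proof -
  have s: "sorted_wrt (\<lambda>a b. b + (p - 1) \<le> a) x" and pos: "\<forall>v\<in>set x. 0 < v" using assms(2) by (auto simp: Gp_def)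
  have sl: "sorted_wrt (\<lambda>a b. b < a) x" by (rule sorted_wrt_mono_rel[OF _ s]) (use assms(1) in auto)
  have pr: "p_regular p x" unfolding p_regular_def
  proof
    fix v assume "v \<in> set x"
    have "count_list x v \<le> 1" using count_strict[OF sl] .
    then show "count_list x v < p" using assms(1) by linarith
  qed
  have "sorted_wrt (\<ge>) x" by (rule sorted_wrt_mono_rel[OF _ sl]) simp
  then have "is_partition x" using pos unfolding is_partition_def by simp
  then show ?thesis using pr by simp
qed

theorem proposition7p3:
  fixes p :: nat and lam :: "nat list"
  assumes "prime p"
    and "sorted_wrt (>) lam"
    and "\<forall>x\<in>set lam. 0 < x"
  shows "mullineux p (concat (map (\<lambda>x. replicate (p - 1) x) lam)) = map (\<lambda>x. (p - 1) * x) lam"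
proof -
  have p: "2 \<le> p" using assms(1) by (simp add: prime_ge_2_nat)
  define x where "x = map (\<lambda>x. (p - 1) * x) lam"
  have g: "Gp p x" unfolding x_def using Gp_mult[OF assms(2,3) p] .
  have hat: "concat (map (\<lambda>x. replicate (p - 1) x) lam) = E p x"
    unfolding x_def using hat_eq[OF p assms(3)] .
  have sE: "sum_list (E p x) = sum_list x" using E_sum[OF p] .
  have sym: "mullineux_symbol p x = map (\<lambda>(a, r). (a, a + (if p dvd a then 0 else 1) - r)) (mullineux_symbol p (E p x))"
    unfolding mullineux_symbol_def sE using sym_E[OF p g] .
  have reg: "p_regular p x \<and> is_partition x" using Gp_regular[OF p g] .
  have "mullineux p (E p x) = x"
    unfolding mullineux_def
  proof (rule the_equality)
    show "is_partition x \<and> p_regular p x \<and> sum_list x = sum_list (E p x) \<and>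
      mullineux_symbol p x = map (\<lambda>(a, r). (a, a + (if p dvd a then 0 else 1) - r)) (mullineux_symbol p (E p x))"
      using reg sE sym by simp
  next
    fix mu assume H: "is_partition mu \<and> p_regular p mu \<and> sum_list mu = sum_list (E p x) \<and>
      mullineux_symbol p mu = map (\<lambda>(a, r). (a, a + (if p dvd a then 0 else 1) - r)) (mullineux_symbol p (E p x))"
    then have "mullineux_symbol p mu = mullineux_symbol p x" using sym by simp
    then have "msym_aux p (sum_list x) mu = msym_aux p (sum_list x) x"
      using H sE by (simp add: mullineux_symbol_def)
    moreover have "is_partition mu" "sum_list mu = sum_list x" using H sE by simp_all
    moreover have "sum_list x \<le> sum_list x" by simp
    ultimately show "mu = x" using uni[OF p, of "sum_list x"] g by simp
  qed
  then show ?thesis unfolding hat x_def[symmetric] .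
qed

end
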